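(* Let $A,B$ be real symmetric $n\times n$ matrices, $f,g\in\mathbb{R}^n$, $\mu\in\mathbb{R}$, and consider the problem (QP1QC): $\inf\, x^TAx-2f^Tx$ subject to $x^TBx-2g^Tx\le\mu$. Suppose the primal Slater condition holds (there exists $x_0$ with $x_0^TBx_0-2g^Tx_0<\mu$), the optimal value of (QP1QC) is finite, and $I_{\succeq}(A,B)=\{\sigma\in\mathbb{R}: A+\sigma B\succeq 0\}$ is an interval containing more than one point. Then the infimum of (QP1QC) is attained.
   Context: $A+\sigma B\succeq 0$ means positive semidefinite. *)

theory Defs
  imports "HOL-Analysis.Analysis"
begin

definition psd :: "real^'n^'n \<Rightarrow> bool" where
  "psd M \<longleftrightarrow> (\<forall>x. 0 \<le> x \<bullet> (M *v x))"

definition symmetric_mat :: "real^'n^'n \<Rightarrow> bool" where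
  "symmetric_mat M \<longleftrightarrow> transpose M = M"

definition I_psd :: "real^'n^'n \<Rightarrow> real^'n^'n \<Rightarrow> real set" where
  "I_psd A B = {\<sigma>. psd (A + \<sigma> *\<^sub>R B)}"

definition qform :: "real^'n^'n \<Rightarrow> real^'n \<Rightarrow> real^'n \<Rightarrow> real" where
  "qform M h x = x \<bullet> (M *v x) - 2 * (h \<bullet> x)"

end

theory Submission
  imports Defs
begin


lemma sym_inner:
  fixes M :: "real^'n^'n"
  assumes "symmetric_mat M" shows "x \<bullet> (M *v y) = y \<bullet> (M *v x)"
proof -
  have "x \<bullet> (M *v y) = (x v* M) \<bullet> y" by (simp add: dot_lmul_matrix)
  also have "x v* M = M *v x" using assms unfolding symmetric_mat_def
    by (metis vector_transpose_matrix)
  finally show ?thesis by (simp add: inner_commute)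
qed

lemma sym_comb:
  fixes A B :: "real^'n^'n"
  assumes "symmetric_mat A" "symmetric_mat B"
  shows "symmetric_mat (A + s *\<^sub>R B)"
  using assms unfolding symmetric_mat_def transpose_def
  by (simp add: vec_eq_iff)

lemma psd_zero:
  fixes M :: "real^'n^'n"
  assumes sym: "symmetric_mat M" and psd: "\<forall>x. 0 \<le> x \<bullet> (M *v x)" and z: "x \<bullet> (M *v x) = 0"
  shows "M *v x = 0"
proof (rule ccontr)
  assume ne: "M *v x \<noteq> 0"
  define y where "y = M *v x"
  define Y where "Y = y \<bullet> y"
  define k where "k = y \<bullet> (M *v y)"
  have Y: "Y > 0" using ne unfolding Y_def y_def by simp
  have k: "k \<ge> 0" using psd unfolding k_def by simp
  define l where "l = Y / (k + 1)"
  have l: "l > 0" using Y k unfolding l_def by simp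
  have xy: "x \<bullet> (M *v y) = Y" using sym_inner[OF sym, of x y] unfolding Y_def y_def by simp
  have "(x - l *\<^sub>R y) \<bullet> (M *v (x - l *\<^sub>R y)) = x \<bullet> (M *v x) - 2 * l * Y + l^2 * k"
    using xy unfolding k_def Y_def y_def
    by (simp add: algebra_simps inner_diff_left inner_diff_right power2_eq_square)
  also have "\<dots> = l * (l * k - 2 * Y)" using z by (simp add: algebra_simps power2_eq_square)
  also have "l * k < Y" using k Y unfolding l_def by (simp add: field_simps)
  then have "l * (l * k - 2 * Y) < 0" using l Y by (simp add: mult_pos_neg)
  finally show False using psd by (metis not_le)
qed

lemma qform_shift:
  fixes M :: "real^'n^'n"
  assumes "symmetric_mat M"
  shows "qform M h (x + l *\<^sub>R d) = qform M h x + 2 * l * (d \<bullet> (M *v x) - h \<bullet> d) + l^2 * (d \<bullet> (M *v d))"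
  using sym_inner[OF assms, of x d] unfolding qform_def
  by (simp add: algebra_simps inner_add_left inner_add_right power2_eq_square)

lemma qform_comb:
  "qform (A + s *\<^sub>R B) (f + s *\<^sub>R g) x = qform A f x + s * qform B g x"
  unfolding qform_def by (simp add: algebra_simps inner_add_left inner_add_right scaleR_matrix_vector_assoc[symmetric])

lemma neg_quad_eventually:
  fixes b c0 \<gamma> \<mu> :: real
  assumes "b < 0"
  shows "\<exists>R>0. \<forall>l. R \<le> \<bar>l\<bar> \<longrightarrow> c0 + 2 * l * \<gamma> + l^2 * b \<le> \<mu>"
proof -
  define R where "R = max 1 ((2*\<bar>\<gamma>\<bar> + \<bar>c0\<bar> + \<bar>\<mu>\<bar>) / (- b))"
  have "R > 0" unfolding R_def by simp
  moreover have "c0 + 2 * l * \<gamma> + l^2 * b \<le> \<mu>" if "R \<le> \<bar>l\<bar>" for l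
  proof -
    have l1: "1 \<le> \<bar>l\<bar>" using that unfolding R_def by simp
    have l2: "(2*\<bar>\<gamma>\<bar> + \<bar>c0\<bar> + \<bar>\<mu>\<bar>) \<le> \<bar>l\<bar> * (- b)"
      using that assms unfolding R_def by (simp add: field_simps)
    have "c0 + 2 * l * \<gamma> - \<mu> \<le> \<bar>l\<bar> * (2*\<bar>\<gamma>\<bar> + \<bar>c0\<bar> + \<bar>\<mu>\<bar>)"
    proof -
      have "2 * l * \<gamma> \<le> \<bar>l\<bar> * (2*\<bar>\<gamma>\<bar>)" using abs_ge_self[of "l*\<gamma>"] by (simp add: abs_mult)
      moreover have "c0 - \<mu> \<le> \<bar>l\<bar> * (\<bar>c0\<bar> + \<bar>\<mu>\<bar>)" using l1
        by (smt (verit, best) mult_le_cancel_right1 abs_ge_zero)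
      ultimately show ?thesis by (simp add: algebra_simps)
    qed
    also have "\<dots> \<le> \<bar>l\<bar> * (\<bar>l\<bar> * (- b))" using mult_left_mono[OF l2, of "\<bar>l\<bar>"] by (simp add: algebra_simps)
    also have "\<dots> = - (l^2 * b)" by (simp add: power2_eq_square abs_mult_self_eq)
    finally show ?thesis by simp
  qed
  ultimately show ?thesis by blast
qed

lemma slope_zero:
  fixes b c0 \<gamma> \<mu> q0 \<beta> L :: real
  assumes "b < 0" and h: "\<forall>l. c0 + 2 * l * \<gamma> + l^2 * b \<le> \<mu> \<longrightarrow> L \<le> q0 + 2 * l * \<beta>"
  shows "\<beta> = 0"
proof (rule ccontr)
  assume nz: "\<beta> \<noteq> 0"
  obtain R where R: "R > 0" "\<forall>l. R \<le> \<bar>l\<bar> \<longrightarrow> c0 + 2 * l * \<gamma> + l^2 * b \<le> \<mu>"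
    using neg_quad_eventually[OF assms(1)] by blast
  define r where "r = max R ((\<bar>q0\<bar> + \<bar>L\<bar> + 1) / (2 * \<bar>\<beta>\<bar>))"
  define l where "l = - sgn \<beta> * r"
  have "\<bar>l\<bar> = r" using nz R unfolding l_def r_def by (simp add: abs_mult)
  then have "R \<le> \<bar>l\<bar>" unfolding r_def by simp
  then have A1: "L \<le> q0 + 2 * l * \<beta>" using R h by blast
  have A2: "2 * l * \<beta> = - 2 * r * \<bar>\<beta>\<bar>" unfolding l_def
    by (simp add: sgn_mult_abs[symmetric] mult_ac) (metis abs_mult_self_eq abs_sgn sgn_mult_abs mult.commute)
  have "(\<bar>q0\<bar> + \<bar>L\<bar> + 1) / (2 * \<bar>\<beta>\<bar>) \<le> r" unfolding r_def by simp
  then have A3: "(\<bar>q0\<bar> + \<bar>L\<bar> + 1) \<le> r * (2 * \<bar>\<beta>\<bar>)" using nz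
    by (simp add: pos_divide_le_eq)
  show False using A1 A2 A3 by linarith
qed



lemma qform_cont: "continuous_on S (qform M h)"
  unfolding qform_def by (intro continuous_intros)

lemma closed_perp: "closed {v::'a::real_inner. \<forall>w\<in>K. v \<bullet> w = 0}"
proof -
  have "{v::'a. \<forall>w\<in>K. v \<bullet> w = 0} = (\<Inter>w\<in>K. {v. w \<bullet> v = 0})"
    by (auto simp: inner_commute)
  then show ?thesis by (simp add: closed_INT closed_hyperplane)
qed

lemma core:
  fixes A B :: "real^'n^'n" and f g :: "real^'n"
  assumes symA: "symmetric_mat A" and symB: "symmetric_mat B"
    and st: "s \<noteq> t" and ps: "\<forall>x. 0 \<le> x \<bullet> ((A + s *\<^sub>R B) *v x)"
    and pt: "\<forall>x. 0 \<le> x \<bullet> ((A + t *\<^sub>R B) *v x)"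
    and x0: "qform B g x0 < \<mu>"
    and L: "\<forall>x. qform B g x \<le> \<mu> \<longrightarrow> L \<le> qform A f x"
    and noti: "\<forall>d. A *v d = 0 \<longrightarrow> f \<bullet> d = 0 \<longrightarrow> 0 \<le> d \<bullet> (B *v d)"
    and notI: "\<forall>w. A *v w = 0 \<longrightarrow> B *v w = 0 \<longrightarrow> g \<bullet> w = 0"
  shows "\<exists>x. qform B g x \<le> \<mu> \<and> (\<forall>y. qform B g y \<le> \<mu> \<longrightarrow> qform A f x \<le> qform A f y)"
proof -
  let ?q = "qform A f" and ?c = "qform B g"
  define K where "K = {w. A *v w = 0 \<and> B *v w = 0}"
  have subK: "subspace K" unfolding K_def subspace_def
    by (simp add: algebra_simps)
  have spanK: "span K = K" using subK by (simp add: span_eq_iff)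
  have fK: "f \<bullet> w = 0" if "w \<in> K" for w
  proof -
    have Aw: "A *v w = 0" and Bw: "B *v w = 0" using that unfolding K_def by auto
    have gw: "g \<bullet> w = 0" using notI Aw Bw by blast
    have "L \<le> ?q x0 + 2 * l * (- (f \<bullet> w))" for l
    proof -
      have "w \<bullet> (B *v x0) = 0" using sym_inner[OF symB, of w x0] Bw by simp
      then have "?c (x0 + l *\<^sub>R w) = ?c x0" using qform_shift[OF symB, of g x0 l w] Bw gw by simp
      then have "L \<le> ?q (x0 + l *\<^sub>R w)" using L x0 by simp
      moreover have "w \<bullet> (A *v x0) = 0" using sym_inner[OF symA, of w x0] Aw by simp
      ultimately show ?thesis using qform_shift[OF symA, of f x0 l w] Aw by simp
    qed
    then show ?thesis
      using slope_zero[of "-1" 0 0 1 L "?q x0" "- (f \<bullet> w)"] by simp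
  qed
  have inv: "?q (x - k) = ?q x \<and> ?c (x - k) = ?c x" if "k \<in> K" for x k
  proof -
    have Ak: "A *v k = 0" and Bk: "B *v k = 0" using that unfolding K_def by auto
    have gk: "g \<bullet> k = 0" using notI Ak Bk by blast
    have fk: "f \<bullet> k = 0" using fK that by blast
    have e: "x - k = x + (-1) *\<^sub>R k" by simp
    have "k \<bullet> (A *v x) = 0" using sym_inner[OF symA, of k x] Ak by simp
    moreover have "k \<bullet> (B *v x) = 0" using sym_inner[OF symB, of k x] Bk by simp
    ultimately show ?thesis unfolding e using qform_shift[OF symA, of f x "-1" k] qform_shift[OF symB, of g x "-1" k]
      Ak Bk gk fk by simp
  qed
  have rep: "\<exists>k\<in>K. \<forall>w\<in>K. (x - k) \<bullet> w = 0" for x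
  proof -
    obtain y z where "y \<in> span K" "\<And>w. w \<in> span K \<Longrightarrow> orthogonal z w" "x = y + z"
      using orthogonal_subspace_decomp_exists[of K x] by blast
    then show ?thesis unfolding spanK orthogonal_def by (intro bexI[of _ y]) auto
  qed
  have quadP: "x \<bullet> ((A + r *\<^sub>R B) *v x) = x \<bullet> (A *v x) + r * (x \<bullet> (B *v x))" for x r
    by (simp add: algebra_simps scaleR_matrix_vector_assoc[symmetric])
  have kerl: "d \<in> K" if "d \<bullet> (A *v d) + s * (d \<bullet> (B *v d)) = 0" "d \<bullet> (A *v d) + t * (d \<bullet> (B *v d)) = 0" for d
  proof -
    have "(A + s *\<^sub>R B) *v d = 0"
      using psd_zero[OF sym_comb[OF symA symB] ps] that quadP by simp
    moreover have "(A + t *\<^sub>R B) *v d = 0"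
      using psd_zero[OF sym_comb[OF symA symB] pt] that quadP by simp
    ultimately have e1: "A *v d + s *\<^sub>R (B *v d) = 0" "A *v d + t *\<^sub>R (B *v d) = 0"
      by (simp_all add: algebra_simps scaleR_matrix_vector_assoc[symmetric])
    have "(s - t) *\<^sub>R (B *v d) = (A *v d + s *\<^sub>R (B *v d)) - (A *v d + t *\<^sub>R (B *v d))"
      by (simp add: algebra_simps)
    then have "(s - t) *\<^sub>R (B *v d) = 0" using e1 by simp
    then have "B *v d = 0" using st by simp
    then show ?thesis using e1 unfolding K_def by simp
  qed
  have slope: "A *v d = 0 \<and> f \<bullet> d = 0" if a0: "d \<bullet> (A *v d) = 0" and bneg: "d \<bullet> (B *v d) < 0" for d
  proof -
    have \<beta>0: "d \<bullet> (A *v x) - f \<bullet> d = 0" for x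
    proof (rule slope_zero[OF bneg, of "?c x" "d \<bullet> (B *v x) - g \<bullet> d" \<mu> L "?q x"], intro allI impI)
      fix l assume "?c x + 2 * l * (d \<bullet> (B *v x) - g \<bullet> d) + l\<^sup>2 * (d \<bullet> (B *v d)) \<le> \<mu>"
      then have "?c (x + l *\<^sub>R d) \<le> \<mu>" using qform_shift[OF symB, of g x l d] by simp
      then have "L \<le> ?q (x + l *\<^sub>R d)" using L by blast
      then show "L \<le> ?q x + 2 * l * (d \<bullet> (A *v x) - f \<bullet> d)" using qform_shift[OF symA, of f x l d] a0 by simp
    qed
    have fd: "f \<bullet> d = 0" using \<beta>0[of 0] by simp
    have "d \<bullet> (A *v (A *v d)) = 0" using \<beta>0[of "A *v d"] fd by simp
    then have "(A *v d) \<bullet> (A *v d) = 0" using sym_inner[OF symA, of d "A *v d"] by simp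
    then show ?thesis using fd by simp
  qed
  define U where "U = {d. norm d = 1 \<and> (\<forall>w\<in>K. d \<bullet> w = 0)}"
  define \<psi> where "\<psi> d = \<bar>d \<bullet> (A *v d)\<bar> + max (d \<bullet> (B *v d)) 0" for d
  have \<psi>pos: "\<psi> d > 0" if "d \<in> U" for d
  proof (rule ccontr)
    assume "\<not> \<psi> d > 0"
    then have a0: "d \<bullet> (A *v d) = 0" and b0: "d \<bullet> (B *v d) \<le> 0" unfolding \<psi>_def by auto
    have dK: "d \<notin> K"
    proof
      assume "d \<in> K"
      then have "d \<bullet> d = 0" using that unfolding U_def by auto
      then show False using that unfolding U_def by simp
    qed
    have sb: "0 \<le> s * (d \<bullet> (B *v d))" and tb: "0 \<le> t * (d \<bullet> (B *v d))"
      using ps pt quadP a0 by (metis add_0)+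
    show False
    proof (cases "d \<bullet> (B *v d) = 0")
      case True
      then show ?thesis using kerl[of d] a0 dK by simp
    next
      case False
      then have "d \<bullet> (B *v d) < 0" using b0 by simp
      then have "A *v d = 0" "f \<bullet> d = 0" using slope a0 by auto
      then show ?thesis using noti False b0 by force
    qed
  qed
  have compU: "compact U"
  proof -
    have "U = sphere 0 1 \<inter> {v. \<forall>w\<in>K. v \<bullet> w = 0}" unfolding U_def by auto
    then show ?thesis using compact_Int_closed[OF compact_sphere closed_perp] by simp
  qed
  have "\<exists>\<epsilon>>0. \<forall>d\<in>U. \<epsilon> \<le> \<psi> d"
  proof (cases "U = {}")
    case True then show ?thesis by (intro exI[of _ 1]) simp
  next
    case False
    have "continuous_on U \<psi>" unfolding \<psi>_def by (intro continuous_intros)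
    then obtain d0 where "d0 \<in> U" "\<forall>d\<in>U. \<psi> d0 \<le> \<psi> d"
      using continuous_attains_inf[OF compU False] by blast
    then show ?thesis using \<psi>pos by blast
  qed
  then obtain \<epsilon> where \<epsilon>: "\<epsilon> > 0" "\<forall>d\<in>U. \<epsilon> \<le> \<psi> d" by blast
  obtain k0 where k0: "k0 \<in> K" "\<forall>w\<in>K. (x0 - k0) \<bullet> w = 0" using rep by blast
  define x1 where "x1 = x0 - k0"
  have x1: "?c x1 \<le> \<mu>" "\<forall>w\<in>K. x1 \<bullet> w = 0" using inv[OF k0(1), of x0] x0 k0 unfolding x1_def by auto
  define M0 where "M0 = ?q x1"
  define C where "C = \<bar>L\<bar> + \<bar>M0\<bar> + \<bar>\<mu>\<bar>"
  define D where "D = 2 * (norm f + norm g)"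
  define R where "R = max 1 (2 * (C + D) / \<epsilon>)"
  have bnd: "norm v \<le> R" if vp: "\<forall>w\<in>K. v \<bullet> w = 0" and vc: "?c v \<le> \<mu>" and vq: "?q v \<le> M0" for v
  proof (cases "norm v \<le> 1")
    case True then show ?thesis unfolding R_def by simp
  next
    case False
    define r where "r = norm v"
    have r1: "r > 1" using False unfolding r_def by simp
    define d where "d = (1 / r) *\<^sub>R v"
    have vd: "v = r *\<^sub>R d" using r1 unfolding d_def by simp
    have dU: "d \<in> U" unfolding U_def d_def r_def using r1 vp False
      by (auto simp: inner_scaleR_left r_def)
    have av: "v \<bullet> (A *v v) = r^2 * (d \<bullet> (A *v d))" unfolding vd
      by (simp add: algebra_simps power2_eq_square)
    have bv: "v \<bullet> (B *v v) = r^2 * (d \<bullet> (B *v d))" unfolding vd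
      by (simp add: algebra_simps power2_eq_square)
    have fv: "\<bar>f \<bullet> v\<bar> \<le> norm f * r" unfolding r_def by (rule Cauchy_Schwarz_ineq2)
    have gv: "\<bar>g \<bullet> v\<bar> \<le> norm g * r" unfolding r_def by (rule Cauchy_Schwarz_ineq2)
    have Lv: "L \<le> ?q v" using L vc by blast
    have key: "r^2 * (\<epsilon> / 2) \<le> (C + D) * r"
    proof -
      have "\<epsilon> \<le> \<psi> d" using \<epsilon> dU by blast
      then have "\<epsilon> / 2 \<le> \<bar>d \<bullet> (A *v d)\<bar> \<or> \<epsilon> / 2 \<le> d \<bullet> (B *v d)" unfolding \<psi>_def by linarith
      then have "r^2 * (\<epsilon> / 2) \<le> \<bar>v \<bullet> (A *v v)\<bar> \<or> r^2 * (\<epsilon> / 2) \<le> v \<bullet> (B *v v)"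
      proof
        assume h: "\<epsilon> / 2 \<le> \<bar>d \<bullet> (A *v d)\<bar>"
        have "r^2 * (\<epsilon> / 2) \<le> r^2 * \<bar>d \<bullet> (A *v d)\<bar>" by (rule mult_left_mono[OF h]) simp
        then show ?thesis unfolding av by (simp add: abs_mult)
      next
        assume h: "\<epsilon> / 2 \<le> d \<bullet> (B *v d)"
        have "r^2 * (\<epsilon> / 2) \<le> r^2 * (d \<bullet> (B *v d))" by (rule mult_left_mono[OF h]) simp
        then show ?thesis unfolding bv by simp
      qed
      moreover have "\<bar>v \<bullet> (A *v v)\<bar> \<le> C + D * r"
      proof -
        have "v \<bullet> (A *v v) = ?q v + 2 * (f \<bullet> v)" unfolding qform_def by simp
        moreover have "0 \<le> norm g * r" using r1 by simp
        ultimately show ?thesis using vq Lv fv unfolding C_def D_def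
          by (simp add: algebra_simps abs_le_iff) linarith
      qed
      moreover have "v \<bullet> (B *v v) \<le> C + D * r"
      proof -
        have "v \<bullet> (B *v v) = ?c v + 2 * (g \<bullet> v)" unfolding qform_def by simp
        moreover have "0 \<le> norm f * r" using r1 by simp
        ultimately show ?thesis using vc gv unfolding C_def D_def
          by (simp add: algebra_simps abs_le_iff) linarith
      qed
      moreover have "C + D * r \<le> (C + D) * r"
      proof -
        have "0 \<le> C" unfolding C_def by simp
        then have "C * 1 \<le> C * r" using r1 by (intro mult_left_mono) auto
        then show ?thesis by (simp add: distrib_right)
      qed
      ultimately show ?thesis by linarith
    qed
    then have "r * (\<epsilon> / 2) \<le> C + D" using r1 by (simp add: power2_eq_square mult.assoc)
    then have "r \<le> 2 * (C + D) / \<epsilon>" using \<epsilon>(1) by (simp add: field_simps)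
    then show ?thesis unfolding R_def r_def by simp
  qed
  define S where "S = {v. (\<forall>w\<in>K. v \<bullet> w = 0) \<and> ?c v \<le> \<mu> \<and> ?q v \<le> M0}"
  have "S \<subseteq> cball 0 R" using bnd unfolding S_def by auto
  then have bS: "bounded S" by (rule bounded_subset[OF bounded_cball])
  have cS: "closed S"
  proof -
    have "S = {v. \<forall>w\<in>K. v \<bullet> w = 0} \<inter> {v. ?c v \<le> \<mu>} \<inter> {v. ?q v \<le> M0}" unfolding S_def by auto
    moreover have "closed {v. ?c v \<le> \<mu>}" by (intro closed_Collect_le) (auto intro: continuous_on_const qform_cont)
    moreover have "closed {v. ?q v \<le> M0}" by (intro closed_Collect_le) (auto intro: continuous_on_const qform_cont)
    ultimately show ?thesis using closed_Int[OF closed_Int[OF closed_perp]] by simp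
  qed
  have "x1 \<in> S" unfolding S_def M0_def using x1 by simp
  then obtain xs where xs: "xs \<in> S" "\<forall>y\<in>S. ?q xs \<le> ?q y"
  proof -
    have "compact S" using bS cS by (simp add: compact_eq_bounded_closed)
    then show ?thesis using continuous_attains_inf[OF _ _ qform_cont] \<open>x1 \<in> S\<close> that by blast
  qed
  show ?thesis
  proof (intro exI conjI allI impI)
    show "?c xs \<le> \<mu>" using xs unfolding S_def by simp
    fix y assume yc: "?c y \<le> \<mu>"
    obtain k where k: "k \<in> K" "\<forall>w\<in>K. (y - k) \<bullet> w = 0" using rep by blast
    show "?q xs \<le> ?q y"
    proof (cases "?q y \<le> M0")
      case True
      then have "y - k \<in> S" unfolding S_def using inv[OF k(1), of y] k yc by simp
      then have "?q xs \<le> ?q (y - k)" using xs by blast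
      then show ?thesis using inv[OF k(1), of y] by simp
    next
      case False
      have "?q xs \<le> ?q x1" using xs \<open>x1 \<in> S\<close> by blast
      then show ?thesis using False unfolding M0_def by simp
    qed
  qed
qed


lemma quad_min:
  fixes M :: "real^'n^'n" and h :: "real^'n"
  assumes sym: "symmetric_mat M" and bd: "\<forall>x. L \<le> qform M h x"
  shows "\<exists>x. \<forall>y. qform M h x \<le> qform M h y"
proof -
  have psd: "\<forall>x. 0 \<le> x \<bullet> ((M + 0 *\<^sub>R 0) *v x)"
  proof
    fix x
    show "0 \<le> x \<bullet> ((M + 0 *\<^sub>R 0) *v x)"
    proof (rule ccontr)
      assume "\<not> ?thesis"
      then have neg: "x \<bullet> (M *v x) < 0" by simp
      obtain R where R: "R > 0" "\<forall>l. R \<le> \<bar>l\<bar> \<longrightarrow> 0 + 2 * l * (- (h \<bullet> x)) + l^2 * (x \<bullet> (M *v x)) \<le> L - 1"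
        using neg_quad_eventually[OF neg] by blast
      have "qform M h (0 + R *\<^sub>R x) = 0 + 2 * R * (- (h \<bullet> x)) + R^2 * (x \<bullet> (M *v x))"
        using qform_shift[OF sym, of h 0 R x] by (simp add: qform_def)
      then have "qform M h (R *\<^sub>R x) \<le> L - 1" using R by simp
      moreover have "L \<le> qform M h (R *\<^sub>R x)" using bd by blast
      ultimately show False by linarith
    qed
  qed
  have sym0: "symmetric_mat (0 :: real^'n^'n)" unfolding symmetric_mat_def transpose_def
    by (simp add: vec_eq_iff)
  have c0: "qform (0 :: real^'n^'n) 0 x = 0" for x by (simp add: qform_def)
  have "\<exists>x. qform 0 0 x \<le> (1::real) \<and> (\<forall>y. qform 0 0 y \<le> (1::real) \<longrightarrow> qform M h x \<le> qform M h y)"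
  proof (rule core[OF sym sym0, of 0 1 0 0 1 L h])
    show "\<forall>x. 0 \<le> x \<bullet> ((M + 0 *\<^sub>R 0) *v x)" by (rule psd)
    show "\<forall>x. 0 \<le> x \<bullet> ((M + 1 *\<^sub>R 0) *v x)" using psd by simp
    show "qform 0 0 0 < (1::real)" by (simp add: qform_def)
    show "\<forall>x. qform 0 0 x \<le> (1::real) \<longrightarrow> L \<le> qform M h x" using bd by blast
    show "\<forall>d. M *v d = 0 \<longrightarrow> h \<bullet> d = 0 \<longrightarrow> 0 \<le> d \<bullet> (0 *v d)" by simp
    show "\<forall>w. M *v w = 0 \<longrightarrow> 0 *v w = 0 \<longrightarrow> 0 \<bullet> w = 0" by simp
    show "(0::real) \<noteq> 1" by simp
  qed
  then show ?thesis by (simp add: qform_def)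
qed

lemma attain:
  fixes A B :: "real^'n^'n" and f g :: "real^'n" and \<mu> :: real
  assumes symA: "symmetric_mat A" and symB: "symmetric_mat B"
    and st: "s \<noteq> t" and ps: "\<forall>x. 0 \<le> x \<bullet> ((A + s *\<^sub>R B) *v x)"
    and pt: "\<forall>x. 0 \<le> x \<bullet> ((A + t *\<^sub>R B) *v x)"
    and x0: "qform B g x0 < \<mu>"
    and L: "\<forall>x. qform B g x \<le> \<mu> \<longrightarrow> L \<le> qform A f x"
  shows "\<exists>x. qform B g x \<le> \<mu> \<and> (\<forall>y. qform B g y \<le> \<mu> \<longrightarrow> qform A f x \<le> qform A f y)"
proof -
  let ?q = "qform A f" and ?c = "qform B g"
  show ?thesis
  proof (cases "\<exists>d. A *v d = 0 \<and> f \<bullet> d = 0 \<and> d \<bullet> (B *v d) < 0")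
    case True
    then obtain d where d: "A *v d = 0" "f \<bullet> d = 0" "d \<bullet> (B *v d) < 0" by blast
    have mv: "\<exists>l. ?c (x + l *\<^sub>R d) \<le> \<mu> \<and> ?q (x + l *\<^sub>R d) = ?q x" for x
    proof -
      obtain R where R: "R > 0" "\<forall>l. R \<le> \<bar>l\<bar> \<longrightarrow> ?c x + 2 * l * (d \<bullet> (B *v x) - g \<bullet> d) + l^2 * (d \<bullet> (B *v d)) \<le> \<mu>"
        using neg_quad_eventually[OF d(3)] by blast
      have "?c (x + R *\<^sub>R d) \<le> \<mu>" using R qform_shift[OF symB, of g x R d] by simp
      moreover have "d \<bullet> (A *v x) = 0" using sym_inner[OF symA, of d x] d by simp
      then have "?q (x + R *\<^sub>R d) = ?q x" using qform_shift[OF symA, of f x R d] d by simp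
      ultimately show ?thesis by blast
    qed
    have "\<forall>x. L \<le> ?q x"
    proof
      fix x obtain l where "?c (x + l *\<^sub>R d) \<le> \<mu>" "?q (x + l *\<^sub>R d) = ?q x" using mv by blast
      then show "L \<le> ?q x" using L by metis
    qed
    then obtain xs where xs: "\<forall>y. ?q xs \<le> ?q y" using quad_min[OF symA] by blast
    obtain l where l: "?c (xs + l *\<^sub>R d) \<le> \<mu>" "?q (xs + l *\<^sub>R d) = ?q xs" using mv by blast
    show ?thesis using xs l by (intro exI[of _ "xs + l *\<^sub>R d"]) simp
  next
    case noti: False
    show ?thesis
    proof (cases "\<exists>w. A *v w = 0 \<and> B *v w = 0 \<and> g \<bullet> w \<noteq> 0")
      case True
      then obtain w where w: "A *v w = 0" "B *v w = 0" "g \<bullet> w \<noteq> 0" by blast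
      define w0 where "w0 = (1 / (g \<bullet> w)) *\<^sub>R w"
      have Aw0: "A *v w0 = 0" and Bw0: "B *v w0 = 0" and gw0: "g \<bullet> w0 = 1"
        using w unfolding w0_def by (simp_all add: algebra_simps)
      define \<gamma> where "\<gamma> = - (f \<bullet> w0)"
      have shc: "?c (x + l *\<^sub>R w0) = ?c x - 2 * l" for x l
      proof -
        have "w0 \<bullet> (B *v x) = 0" using sym_inner[OF symB, of w0 x] Bw0 by simp
        then show ?thesis using qform_shift[OF symB, of g x l w0] Bw0 gw0 by simp
      qed
      have shq: "?q (x + l *\<^sub>R w0) = ?q x + 2 * l * \<gamma>" for x l
      proof -
        have "w0 \<bullet> (A *v x) = 0" using sym_inner[OF symA, of w0 x] Aw0 by simp
        then show ?thesis using qform_shift[OF symA, of f x l w0] Aw0 unfolding \<gamma>_def by simp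
      qed
      have g0: "\<gamma> \<ge> 0"
      proof (rule ccontr)
        assume "\<not> \<gamma> \<ge> 0"
        then have gn: "\<gamma> < 0" by simp
        define l where "l = (\<bar>?q x0\<bar> + \<bar>L\<bar> + 1) / (- 2 * \<gamma>)"
        have lpos: "l \<ge> 0" unfolding l_def using gn by (simp add: divide_nonneg_neg)
        have "2 * l * \<gamma> = - (\<bar>?q x0\<bar> + \<bar>L\<bar> + 1)" unfolding l_def using gn by (simp add: field_simps)
        moreover have "?c (x0 + l *\<^sub>R w0) \<le> \<mu>" using shc lpos x0 by simp
        then have "L \<le> ?q (x0 + l *\<^sub>R w0)" using L by blast
        ultimately show False using shq by simp
      qed
      define F where "F = qform (A + \<gamma> *\<^sub>R B) (f + \<gamma> *\<^sub>R g)"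
      have Fq: "F x = ?q x + \<gamma> * ?c x" for x unfolding F_def by (rule qform_comb)
      define mv where "mv x = x + ((?c x - \<mu>) / 2) *\<^sub>R w0" for x
      have mvc: "?c (mv x) = \<mu>" for x unfolding mv_def shc by (simp add: field_simps)
      have mvq: "?q (mv x) = F x - \<gamma> * \<mu>" for x unfolding mv_def shq Fq by (simp add: field_simps)
      have "\<forall>x. L + \<gamma> * \<mu> \<le> F x"
      proof
        fix x have "L \<le> ?q (mv x)" using L mvc by simp
        then show "L + \<gamma> * \<mu> \<le> F x" using mvq by simp
      qed
      then obtain xs where xs: "\<forall>y. F xs \<le> F y"
        using quad_min[OF sym_comb[OF symA symB]] unfolding F_def by blast
      show ?thesis
      proof (intro exI[of _ "mv xs"] conjI allI impI)
        show "?c (mv xs) \<le> \<mu>" using mvc by simp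
        fix y assume yc: "?c y \<le> \<mu>"
        have "?q (mv xs) \<le> F y - \<gamma> * \<mu>" using xs mvq by simp
        also have "\<dots> = ?q y + \<gamma> * (?c y - \<mu>)" using Fq by (simp add: algebra_simps)
        also have "\<dots> \<le> ?q y" using g0 yc by (simp add: mult_nonneg_nonpos)
        finally show "?q (mv xs) \<le> ?q y" .
      qed
    next
      case False
      show ?thesis
        by (rule core[OF symA symB st ps pt x0 L]) (use noti False in auto)
    qed
  qed
qed


theorem theorem6:
  fixes A B :: "real^'n^'n" and f g :: "real^'n" and \<mu> :: real
  assumes "symmetric_mat A" and "symmetric_mat B"
    and slater: "\<exists>x0. qform B g x0 < \<mu>"
    and finite_val: "bdd_below ((qform A f) ` {x. qform B g x \<le> \<mu>})"
    and interval: "is_interval (I_psd A B)"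
    and nontriv: "\<exists>s\<in>I_psd A B. \<exists>t\<in>I_psd A B. s \<noteq> t"
  shows "\<exists>x. qform B g x \<le> \<mu> \<and>
           qform A f x = (INF y\<in>{y. qform B g y \<le> \<mu>}. qform A f y)"
proof -
  obtain s t where st: "s \<in> I_psd A B" "t \<in> I_psd A B" "s \<noteq> t" using nontriv by blast
  have ps: "\<forall>x. 0 \<le> x \<bullet> ((A + s *\<^sub>R B) *v x)" and pt: "\<forall>x. 0 \<le> x \<bullet> ((A + t *\<^sub>R B) *v x)"
    using st unfolding I_psd_def psd_def by auto
  obtain x0 where x0: "qform B g x0 < \<mu>" using slater by blast
  obtain L where L: "\<forall>y\<in>(qform A f) ` {x. qform B g x \<le> \<mu>}. L \<le> y"
    using finite_val unfolding bdd_below_def by blast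
  have L': "\<forall>x. qform B g x \<le> \<mu> \<longrightarrow> L \<le> qform A f x" using L by blast
  obtain xs where xs: "qform B g xs \<le> \<mu>" "\<forall>y. qform B g y \<le> \<mu> \<longrightarrow> qform A f xs \<le> qform A f y"
    using attain[OF assms(1,2) st(3) ps pt x0 L'] by blast
  have "(INF y\<in>{y. qform B g y \<le> \<mu>}. qform A f y) = qform A f xs"
    by (rule cInf_eq_minimum) (use xs in auto)
  then show ?thesis using xs by auto
qed

end
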